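(* Let $n\in\{2,3\}$ and $f\in\mathfrak{F}_{sc}$. For every density matrix $\rho$ on $\mathbb{C}^n$ with diagonal entries $\rho_{11},\dots,\rho_{nn}$ in the reference basis, $$\max_{\mathfrak{D}}\bar C_f(\mathfrak{D})=f(\rho_{11},\dots,\rho_{nn}),$$ where the maximum is over all pure state decompositions $\mathfrak{D}$ of $\rho$ (and is attained).
   Context: Fix the reference orthonormal basis $\{|i\rangle\}_{i=1}^n$ of $\mathbb{C}^n$. Let $\Omega$ be the probability simplex in $\mathbb{R}^n$. $\mathfrak{F}_{sc}$ denotes the set of functions $f:\Omega\to\mathbb{R}$ such that (i) $f((1,0,\dots,0)^T)=0$; (ii) $f(P\mathbf{x})=f(\mathbf{x})$ for every permutation matrix $P$; (iii) $f$ is concave. For a unit vector $|\psi\rangle=\sum_i\psi_i|i\rangle$, $C_f(|\psi\rangle)=f(|\psi_1|^2,\dots,|\psi_n|^2)$. A pure state decomposition of $\rho$ is a finite family $\{p_k,|\psi_k\rangle\}$ with $p_k>0$, $\sum_kp_k=1$, unit vectors $|\psi_k\rangle$ and $\rho=\sum_kp_k|\psi_k\rangle\langle\psi_k|$; its average coherence is $\bar C_f(\mathfrak{D})=\sum_kp_kC_f(|\psi_k\rangle)$. *)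

theory Defs
  imports "HOL-Analysis.Analysis" "HOL-Combinatorics.Permutations"
begin

text \<open>Vectors in R^n / C^n are functions on nat, meaningful on indices 0..n-1
  (index i here corresponds to basis vector |i+1> of the paper).
  Matrices are functions nat => nat => complex, meaningful on {0..<n}^2.\<close>

definition prob_simplex :: "nat \<Rightarrow> (nat \<Rightarrow> real) set" where
  "prob_simplex n = {x. (\<forall>i<n. 0 \<le> x i) \<and> (\<forall>i\<ge>n. x i = 0) \<and> (\<Sum>i<n. x i) = 1}"

definition e1 :: "nat \<Rightarrow> real" where
  "e1 = (\<lambda>i. if i = 0 then 1 else 0)"

definition F_sc :: "nat \<Rightarrow> ((nat \<Rightarrow> real) \<Rightarrow> real) set" where
  "F_sc n = {f.
      f e1 = 0
    \<and> (\<forall>x\<in>prob_simplex n. \<forall>p. p permutes {..<n} \<longrightarrow> f (x \<circ> p) = f x)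
    \<and> (\<forall>x\<in>prob_simplex n. \<forall>y\<in>prob_simplex n. \<forall>t::real. 0 \<le> t \<and> t \<le> 1 \<longrightarrow>
          t * f x + (1 - t) * f y \<le> f (\<lambda>i. t * x i + (1 - t) * y i))}"

definition density_matrix :: "nat \<Rightarrow> (nat \<Rightarrow> nat \<Rightarrow> complex) \<Rightarrow> bool" where
  "density_matrix n \<rho> \<longleftrightarrow>
     (\<forall>i<n. \<forall>j<n. \<rho> j i = cnj (\<rho> i j))
   \<and> (\<forall>v::nat \<Rightarrow> complex. 0 \<le> Re (\<Sum>i<n. \<Sum>j<n. cnj (v i) * \<rho> i j * v j))
   \<and> (\<Sum>i<n. \<rho> i i) = 1"

definition unit_vec :: "nat \<Rightarrow> (nat \<Rightarrow> complex) \<Rightarrow> bool" where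
  "unit_vec n \<psi> \<longleftrightarrow> (\<Sum>i<n. (cmod (\<psi> i))\<^sup>2) = 1"

definition pure_decomp ::
  "nat \<Rightarrow> (nat \<Rightarrow> nat \<Rightarrow> complex) \<Rightarrow> (real \<times> (nat \<Rightarrow> complex)) list \<Rightarrow> bool" where
  "pure_decomp n \<rho> D \<longleftrightarrow>
     (\<forall>(p, \<psi>) \<in> set D. 0 < p \<and> unit_vec n \<psi>)
   \<and> (\<Sum>k<length D. fst (D ! k)) = 1
   \<and> (\<forall>i<n. \<forall>j<n. \<rho> i j =
        (\<Sum>k<length D. complex_of_real (fst (D ! k)) * snd (D ! k) i * cnj (snd (D ! k) j)))"

definition coh :: "nat \<Rightarrow> ((nat \<Rightarrow> real) \<Rightarrow> real) \<Rightarrow> (nat \<Rightarrow> complex) \<Rightarrow> real" where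
  "coh n f \<psi> = f (\<lambda>i. if i < n then (cmod (\<psi> i))\<^sup>2 else 0)"

definition avg_coh ::
  "nat \<Rightarrow> ((nat \<Rightarrow> real) \<Rightarrow> real) \<Rightarrow> (real \<times> (nat \<Rightarrow> complex)) list \<Rightarrow> real" where
  "avg_coh n f D = (\<Sum>k<length D. fst (D ! k) * coh n f (snd (D ! k)))"

definition diag_vec :: "nat \<Rightarrow> (nat \<Rightarrow> nat \<Rightarrow> complex) \<Rightarrow> nat \<Rightarrow> real" where
  "diag_vec n \<rho> = (\<lambda>i. if i < n then Re (\<rho> i i) else 0)"

end

theory Submission
  imports Defs
begin


lemma sum_len_conv: "(\<Sum>k<length D. g (D ! k)) = sum_list (map g D)"
  by (simp add: sum_list_sum_nth atLeast0LessThan)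

lemma sum3: "(\<Sum>i<(3::nat). g i) = g 0 + g 1 + (g 2 :: 'a::comm_monoid_add)"
  by (simp add: numeral_3_eq_3 numeral_2_eq_2 lessThan_Suc add.commute add.left_commute)

lemma sum2: "(\<Sum>i<(2::nat). g i) = g 0 + (g 1 :: 'a::comm_monoid_add)"
  by (simp add: numeral_2_eq_2 lessThan_Suc add.commute)

lemma simplex_comb:
  assumes "x \<in> prob_simplex n" "y \<in> prob_simplex n" "0 \<le> t" "t \<le> 1"
  shows "(\<lambda>i. t * x i + (1 - t) * y i) \<in> prob_simplex n"
  using assms unfolding prob_simplex_def
  by (auto simp: sum.distrib sum_distrib_left[symmetric])

lemma comb_aux:
  fixes S p x Q :: real
  assumes "S \<noteq> 0" "p + S \<noteq> 0"
  shows "p / (p + S) * x + (1 - p / (p + S)) * (Q / S) = (p * x + Q) / (p + S)"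
proof -
  have "1 - p / (p + S) = S / (p + S)" using assms by (simp add: field_simps)
  moreover have "S / (p + S) * (Q / S) = Q / (p + S)" using assms by simp
  ultimately show ?thesis by (simp add: add_divide_distrib)
qed

lemma jensen_list:
  assumes "f \<in> F_sc n" "L \<noteq> []" "\<forall>(p,x)\<in>set L. 0 < p \<and> x \<in> prob_simplex n"
  shows "sum_list (map (\<lambda>(p,x). p * f x) L) \<le> sum_list (map fst L) * f (\<lambda>i. sum_list (map (\<lambda>(p,x). p * x i) L) / sum_list (map fst L))
       \<and> (\<lambda>i. sum_list (map (\<lambda>(p,x). p * x i) L) / sum_list (map fst L)) \<in> prob_simplex n
       \<and> 0 < sum_list (map fst L)"
  using assms(2,3)
proof (induction L)
  case Nil then show ?case by simp
next
  case (Cons a L)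
  obtain p x where a: "a = (p, x)" by fastforce
  have p: "0 < p" "x \<in> prob_simplex n" using Cons.prems a by auto
  show ?case
  proof (cases "L = []")
    case True
    then show ?thesis using p a by simp
  next
    case False
    define S where "S = sum_list (map fst L)"
    define y where "y = (\<lambda>i. sum_list (map (\<lambda>(p,x). p * x i) L) / S)"
    have IH: "sum_list (map (\<lambda>(p,x). p * f x) L) \<le> S * f y" "y \<in> prob_simplex n" "0 < S"
      using Cons.IH[OF False] Cons.prems unfolding S_def y_def by auto
    define t where "t = p / (p + S)"
    have t: "0 \<le> t" "t \<le> 1" using p IH unfolding t_def by auto
    have conc: "t * f x + (1 - t) * f y \<le> f (\<lambda>i. t * x i + (1 - t) * y i)"
      using assms(1) p IH t unfolding F_sc_def by blast
    have eq: "(\<lambda>i. t * x i + (1 - t) * y i) = (\<lambda>i. (p * x i + sum_list (map (\<lambda>(p,x). p * x i) L)) / (p + S))"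
    proof (rule ext)
      fix i
      have "S \<noteq> 0" "p + S \<noteq> 0" using p IH by auto
      then show "t * x i + (1 - t) * y i = (p * x i + sum_list (map (\<lambda>(p,x). p * x i) L)) / (p + S)"
        unfolding t_def y_def by (rule comb_aux)
    qed
    have "1 - t = S / (p + S)" using p IH unfolding t_def by (auto simp: field_simps)
    then have "(p + S) * (t * f x + (1 - t) * f y) = (p + S) * t * f x + (p + S) * (S / (p + S)) * f y"
      by (simp only: distrib_left mult.assoc)
    also have "... = p * f x + S * f y" using p IH unfolding t_def by simp
    finally have "(p + S) * (t * f x + (1 - t) * f y) = p * f x + S * f y" .
    moreover have "(p + S) * (t * f x + (1 - t) * f y) \<le> (p + S) * f (\<lambda>i. t * x i + (1 - t) * y i)"
      using conc p IH by (intro mult_left_mono) auto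
    ultimately have "p * f x + sum_list (map (\<lambda>(p,x). p * f x) L) \<le> (p + S) * f (\<lambda>i. t * x i + (1 - t) * y i)"
      using IH by linarith
    moreover have "(\<lambda>i. t * x i + (1 - t) * y i) \<in> prob_simplex n"
      using simplex_comb[OF p(2) IH(2) t] .
    ultimately show ?thesis using a eq p IH unfolding S_def by simp
  qed
qed

definition cvec :: "nat \<Rightarrow> (nat \<Rightarrow> complex) \<Rightarrow> nat \<Rightarrow> real" where
  "cvec n \<psi> = (\<lambda>i. if i < n then (cmod (\<psi> i))\<^sup>2 else 0)"

lemma cvec_simplex: "unit_vec n \<psi> \<Longrightarrow> cvec n \<psi> \<in> prob_simplex n"
  unfolding cvec_def prob_simplex_def unit_vec_def by auto

lemma upper_bound:
  assumes f: "f \<in> F_sc n" and D: "pure_decomp n \<rho> D"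
  shows "avg_coh n f D \<le> f (diag_vec n \<rho>)"
proof -
  define L where "L = map (\<lambda>(p,\<psi>). (p, cvec n \<psi>)) D"
  have D1: "\<forall>(p, \<psi>) \<in> set D. 0 < p \<and> unit_vec n \<psi>"
    and D2: "sum_list (map fst D) = 1"
    and D3: "\<forall>i<n. \<forall>j<n. \<rho> i j = sum_list (map (\<lambda>(p,\<psi>). complex_of_real p * \<psi> i * cnj (\<psi> j)) D)"
    using D unfolding pure_decomp_def by (auto simp: case_prod_beta sum_len_conv[symmetric])
  have Lne: "L \<noteq> []" using D2 unfolding L_def by auto
  have Lok: "\<forall>(p,x)\<in>set L. 0 < p \<and> x \<in> prob_simplex n"
    using D1 cvec_simplex unfolding L_def by auto
  note J = jensen_list[OF f Lne Lok]
  have S: "sum_list (map fst L) = 1" using D2 unfolding L_def by (simp add: o_def case_prod_beta)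
  have avg: "avg_coh n f D = sum_list (map (\<lambda>(p,x). p * f x) L)"
    unfolding avg_coh_def L_def coh_def cvec_def by (simp add: o_def case_prod_beta sum_len_conv[symmetric])
  have diag: "(\<lambda>i. sum_list (map (\<lambda>(p,x). p * x i) L)) = diag_vec n \<rho>"
  proof (rule ext)
    fix i
    show "sum_list (map (\<lambda>(p,x). p * x i) L) = diag_vec n \<rho> i"
    proof (cases "i < n")
      case True
      have "\<rho> i i = sum_list (map (\<lambda>(p,\<psi>). complex_of_real p * \<psi> i * cnj (\<psi> i)) D)"
        using D3 True by auto
      also have "... = sum_list (map (\<lambda>(p,\<psi>). complex_of_real (p * (cmod (\<psi> i))\<^sup>2)) D)"
        by (rule arg_cong[where f=sum_list], rule map_cong) (auto simp only: of_real_mult complex_norm_square mult.assoc)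
      also have "... = complex_of_real (sum_list (map (\<lambda>(p,\<psi>). p * (cmod (\<psi> i))\<^sup>2) D))"
        by (induction D) auto
      finally have "Re (\<rho> i i) = sum_list (map (\<lambda>(p,\<psi>). p * (cmod (\<psi> i))\<^sup>2) D)" by simp
      then show ?thesis using True unfolding L_def diag_vec_def cvec_def by (simp add: o_def case_prod_unfold)
    next
      case False
      then show ?thesis unfolding L_def diag_vec_def cvec_def by (simp add: o_def case_prod_beta)
    qed
  qed
  show ?thesis using J S avg diag by simp
qed



lemma cmod_shift_sq:
  fixes z d :: complex and t :: real
  assumes "cmod d = 1"
  shows "(cmod (z + of_real t * d))\<^sup>2 = (cmod z)\<^sup>2 + 2 * t * Re (cnj z * d) + t\<^sup>2"
proof -
  have d: "(Re d)\<^sup>2 + (Im d)\<^sup>2 = 1" using assms by (simp add: cmod_def)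
  have "(cmod (z + of_real t * d))\<^sup>2 = (Re z + t * Re d)\<^sup>2 + (Im z + t * Im d)\<^sup>2"
    by (simp add: cmod_power2)
  also have "... = (Re z)\<^sup>2 + (Im z)\<^sup>2 + 2 * t * (Re z * Re d + Im z * Im d) + t\<^sup>2 * ((Re d)\<^sup>2 + (Im d)\<^sup>2)"
    by (simp add: power2_eq_square algebra_simps)
  finally show ?thesis using d by (simp add: cmod_power2)
qed

lemma chord:
  fixes z d :: complex and r :: real
  assumes "cmod z \<le> r" "cmod d = 1"
  shows "\<exists>t1 t2 l. 0 \<le> l \<and> l \<le> 1 \<and> cmod (z + of_real t1 * d) = r \<and> cmod (z + of_real t2 * d) = r
      \<and> l * t1 + (1 - l) * t2 = 0"
proof -
  define p where "p = Re (cnj z * d)"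
  define D where "D = p\<^sup>2 + r\<^sup>2 - (cmod z)\<^sup>2"
  have r0: "0 \<le> r" using assms(1) norm_ge_zero order_trans by blast
  have "(cmod z)\<^sup>2 \<le> r\<^sup>2" using assms(1) by (simp add: power_mono)
  then have D0: "p\<^sup>2 \<le> D" unfolding D_def by simp
  then have D1: "0 \<le> D" by (smt (verit) zero_le_power2)
  define s where "s = sqrt D"
  have s0: "0 \<le> s" and ss: "s\<^sup>2 = D" using D1 unfolding s_def by auto
  have sp: "\<bar>p\<bar> \<le> s" unfolding s_def using D0 real_sqrt_abs real_sqrt_le_mono by fastforce
  define t1 where "t1 = - p + s"
  define t2 where "t2 = - p - s"
  have root: "(cmod (z + of_real t * d))\<^sup>2 = r\<^sup>2" if "t = t1 \<or> t = t2" for t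
  proof -
    have "(cmod (z + of_real t * d))\<^sup>2 = (cmod z)\<^sup>2 + 2 * t * p + t\<^sup>2"
      using cmod_shift_sq[OF assms(2)] unfolding p_def by simp
    also have "... = (cmod z)\<^sup>2 - p\<^sup>2 + (t + p)\<^sup>2" by (simp add: power2_eq_square algebra_simps)
    also have "(t + p)\<^sup>2 = s\<^sup>2" using that unfolding t1_def t2_def by (auto simp: power2_eq_square)
    also have "(cmod z)\<^sup>2 - p\<^sup>2 + s\<^sup>2 = r\<^sup>2" using ss unfolding D_def by simp
    finally show ?thesis .
  qed
  have c1: "cmod (z + of_real t1 * d) = r"
    using root[of t1] r0 by (simp add: power2_eq_iff_nonneg)
  have c2: "cmod (z + of_real t2 * d) = r"
    using root[of t2] r0 by (simp add: power2_eq_iff_nonneg)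
  have t1: "0 \<le> t1" and t2: "t2 \<le> 0" using sp unfolding t1_def t2_def by auto
  show ?thesis
  proof (cases "t1 = t2")
    case True
    then have "t1 = 0" using t1 t2 by simp
    then show ?thesis using c1 c2 True by (intro exI[of _ t1] exI[of _ t2] exI[of _ "1/2"]) auto
  next
    case False
    define l where "l = - t2 / (t1 - t2)"
    have pos: "0 < t1 - t2" using t1 t2 False by simp
    have "0 \<le> l" "l \<le> 1" unfolding l_def using pos t1 t2 by (auto simp: field_simps)
    moreover have "l * t1 + (1 - l) * t2 = 0" unfolding l_def using pos by (simp add: field_simps)
    ultimately show ?thesis using c1 c2 by blast
  qed
qed



definition psdF :: "real \<Rightarrow> real \<Rightarrow> real \<Rightarrow> complex \<Rightarrow> complex \<Rightarrow> complex \<Rightarrow> complex \<Rightarrow> complex \<Rightarrow> complex \<Rightarrow> real" where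
  "psdF d0 d1 d2 r01 r02 r12 x y z = d0*(cmod x)\<^sup>2 + d1*(cmod y)\<^sup>2 + d2*(cmod z)\<^sup>2
     + 2*Re(cnj x * r01 * y) + 2*Re(cnj x * r02 * z) + 2*Re(cnj y * r12 * z)"

lemma cnj_mult_self: "cnj r * r = complex_of_real ((cmod r)\<^sup>2)"
  by (metis complex_norm_square mult.commute)

lemma cmod_mult_self: "cmod z * cmod z = Re z * Re z + Im z * Im z"
  using cmod_power2[of z] by (simp add: power2_eq_square)

lemmas csimps = cmod_power2 power2_eq_square cmod_mult_self algebra_simps

lemma minor2:
  fixes da db :: real and r :: complex
  assumes P: "\<And>x y. 0 \<le> da*(cmod x)\<^sup>2 + db*(cmod y)\<^sup>2 + 2*Re(cnj x * r * y)"
  shows "0 \<le> da" "0 \<le> db" "(cmod r)\<^sup>2 \<le> da * db"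
proof -
  show da: "0 \<le> da" using P[of 1 0] by simp
  show db: "0 \<le> db" using P[of 0 1] by simp
  show "(cmod r)\<^sup>2 \<le> da * db"
  proof (cases "da = 0")
    case True
    show ?thesis
    proof (rule ccontr)
      assume "\<not> ?thesis"
      then have r: "0 < (cmod r)\<^sup>2" using True by simp
      define s where "s = (db + 1) / (2 * (cmod r)\<^sup>2)"
      have "Re (cnj (- of_real s * r) * r * 1) = - s * (cmod r)\<^sup>2"
        by (simp add: csimps)
      moreover have "s * (cmod r)\<^sup>2 = (db + 1) / 2" unfolding s_def using r by simp
      ultimately show False using P[of "- of_real s * r" 1] True by simp
    qed
  next
    case False
    then have da': "0 < da" using da by simp
    have R: "Re (cnj r * r * complex_of_real (- da)) = - da * (cmod r)\<^sup>2"
      by (simp add: csimps)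
    have "0 \<le> da*(cmod r)\<^sup>2 + db*(cmod (complex_of_real (- da)))\<^sup>2 + 2*Re(cnj r * r * complex_of_real (- da))"
      by (rule P)
    then have "0 \<le> da * (cmod r)\<^sup>2 + db * da\<^sup>2 - 2 * da * (cmod r)\<^sup>2"
      unfolding R by (simp add: norm_of_real)
    then have "0 \<le> da * (da * db - (cmod r)\<^sup>2)" by (simp add: algebra_simps power2_eq_square)
    then show ?thesis using da' by (simp add: zero_le_mult_iff)
  qed
qed

lemma Re_cnj_swap: "Re (cnj B * A * cnj z) = Re (cnj A * B * z)"
proof -
  show ?thesis by (simp add: algebra_simps)
qed

lemma schur_ineq:
  assumes P: "\<And>x y z. 0 \<le> psdF d0 d1 d2 r01 r02 r12 x y z"
    and a: "0 < a" "a*a = d0" and b: "0 < b" "b*b = d1"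
    and e1: "r01 = of_real (a*b) * \<alpha>" and e2: "r02 = of_real a * \<beta>" and e3: "r12 = of_real b * \<gamma>"
    and E1: "A + B*\<alpha> = \<beta>" and E2: "A * cnj \<alpha> + B = \<gamma>"
  shows "(cmod A)\<^sup>2 + (cmod B)\<^sup>2 + 2*Re(cnj A * B * \<alpha>) \<le> d2"
proof -
  have an: "complex_of_real a \<noteq> 0" and bn: "complex_of_real b \<noteq> 0" using a b by auto
  have c1: "d0*(cmod (-A/of_real a))\<^sup>2 = (cmod A)\<^sup>2"
  proof -
    have "cmod (-A/of_real a) = cmod A / a" using a(1) by (simp add: norm_divide)
    then show ?thesis unfolding a(2)[symmetric] using a(1) by (simp add: power_divide power2_eq_square)
  qed
  have c2: "d1*(cmod (-B/of_real b))\<^sup>2 = (cmod B)\<^sup>2"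
  proof -
    have "cmod (-B/of_real b) = cmod B / b" using b(1) by (simp add: norm_divide)
    then show ?thesis unfolding b(2)[symmetric] using b(1) by (simp add: power_divide power2_eq_square)
  qed
  have c3: "cnj (-A/of_real a) * r01 * (-B/of_real b) = cnj A * B * \<alpha>"
    unfolding e1 using an bn by (simp add: field_simps)
  have c4: "cnj (-A/of_real a) * r02 * 1 = - (cnj A * A) - cnj A * B * \<alpha>"
    unfolding e2 E1[symmetric] using an by (simp add: field_simps)
  have c5: "cnj (-B/of_real b) * r12 * 1 = - (cnj B * A * cnj \<alpha>) - cnj B * B"
    unfolding e3 E2[symmetric] using bn by (simp add: field_simps)
  have rA: "Re (cnj A * A) = (cmod A)\<^sup>2" and rB: "Re (cnj B * B) = (cmod B)\<^sup>2"
    by (simp_all add: csimps)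
  have "0 \<le> psdF d0 d1 d2 r01 r02 r12 (-A/of_real a) (-B/of_real b) 1" by (rule P)
  then have "0 \<le> (cmod A)\<^sup>2 + (cmod B)\<^sup>2 + d2 + 2 * Re (cnj A * B * \<alpha>)
      + 2 * Re (- (cnj A * A) - cnj A * B * \<alpha>) + 2 * Re (- (cnj B * A * cnj \<alpha>) - cnj B * B)"
    unfolding psdF_def c1 c2 c3 c4 c5 by simp
  moreover have "Re (- (cnj A * A) - cnj A * B * \<alpha>) = - (cmod A)\<^sup>2 - Re (cnj A * B * \<alpha>)"
    by (simp only: minus_complex.sel uminus_complex.sel rA)
  moreover have "Re (- (cnj B * A * cnj \<alpha>) - cnj B * B) = - Re (cnj A * B * \<alpha>) - (cmod B)\<^sup>2"
    by (simp only: minus_complex.sel uminus_complex.sel rB Re_cnj_swap)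
  ultimately show ?thesis by linarith
qed

lemma kernel_eq:
  assumes P: "\<And>x y z. 0 \<le> psdF d0 d1 d2 r01 r02 r12 x y z"
    and d2: "0 \<le> d2" and sq: "(cmod r01)\<^sup>2 = d0 * d1"
  shows "of_real d0 * r12 = cnj r01 * r02"
proof -
  define s where "s = of_real d0 * r12 - cnj r01 * r02"
  define e where "e = 1 / (d2 + 1)"
  have e0: "0 < e" "d2 * e < 1" using d2 unfolding e_def by (auto simp: field_simps)
  define u where "u = - of_real e * cnj s"
  have t1: "d0*(cmod (-r01))\<^sup>2 + d1*(cmod (of_real d0 :: complex))\<^sup>2 + 2*Re(cnj (-r01) * r01 * of_real d0) = 0"
  proof -
    have R: "Re(cnj (-r01) * r01 * of_real d0) = - d0 * (cmod r01)\<^sup>2" by (simp add: csimps)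
    have N1: "(cmod (-r01))\<^sup>2 = d0 * d1" using sq by simp
    have N2: "(cmod (of_real d0 :: complex))\<^sup>2 = d0 * d0" by (simp add: power2_eq_square)
    show ?thesis unfolding R N1 N2 sq by (simp add: algebra_simps)
  qed
  have t2: "Re (cnj (-r01) * r02 * u) + Re (cnj (of_real d0) * r12 * u) = Re (s * u)"
    unfolding s_def by (simp add: algebra_simps)
  have t3: "Re (s * u) = - e * (cmod s)\<^sup>2" unfolding u_def by (simp add: csimps)
  have t4: "(cmod u)\<^sup>2 = e\<^sup>2 * (cmod s)\<^sup>2" unfolding u_def using e0
    by (simp add: norm_mult norm_of_real power_mult_distrib)
  have "0 \<le> psdF d0 d1 d2 r01 r02 r12 (-r01) (of_real d0) u" by (rule P)
  then have "0 \<le> d2 * (cmod u)\<^sup>2 + 2 * Re (s * u)"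
    unfolding psdF_def using t1 t2 by linarith
  then have "0 \<le> (cmod s)\<^sup>2 * e * (d2 * e - 2)" unfolding t3 t4 by (simp add: algebra_simps power2_eq_square)
  moreover have "e * (d2 * e - 2) < 0" using e0 by (simp add: mult_pos_neg)
  ultimately have "(cmod s)\<^sup>2 \<le> 0"
  proof -
    assume A1: "0 \<le> (cmod s)\<^sup>2 * e * (d2 * e - 2)" and A2: "e * (d2 * e - 2) < 0"
    show ?thesis
    proof (rule ccontr)
      assume "\<not> (cmod s)\<^sup>2 \<le> 0"
      then have "0 < (cmod s)\<^sup>2" by simp
      from mult_pos_neg[OF this A2] A1 show False by (simp add: mult.assoc)
    qed
  qed
  then have "s = 0" by simp
  then show ?thesis unfolding s_def by simp
qed



lemma minors:
  assumes P: "\<And>x y z. 0 \<le> psdF d0 d1 d2 r01 r02 r12 x y z"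
  shows "0 \<le> d0" "0 \<le> d1" "0 \<le> d2" "(cmod r01)\<^sup>2 \<le> d0 * d1" "(cmod r02)\<^sup>2 \<le> d0 * d2"
    "(cmod r12)\<^sup>2 \<le> d1 * d2"
proof -
  have P01: "\<And>x y. 0 \<le> d0*(cmod x)\<^sup>2 + d1*(cmod y)\<^sup>2 + 2*Re(cnj x * r01 * y)"
    using P[of _ _ 0] unfolding psdF_def by simp
  have P02: "\<And>x y. 0 \<le> d0*(cmod x)\<^sup>2 + d2*(cmod y)\<^sup>2 + 2*Re(cnj x * r02 * y)"
    using P[of _ 0] unfolding psdF_def by simp
  have P12: "\<And>x y. 0 \<le> d1*(cmod x)\<^sup>2 + d2*(cmod y)\<^sup>2 + 2*Re(cnj x * r12 * y)"
    using P[of 0] unfolding psdF_def by simp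
  show "0 \<le> d0" "0 \<le> d1" "(cmod r01)\<^sup>2 \<le> d0 * d1" using minor2[OF P01] by auto
  show "0 \<le> d2" "(cmod r02)\<^sup>2 \<le> d0 * d2" using minor2[OF P02] by auto
  show "(cmod r12)\<^sup>2 \<le> d1 * d2" using minor2[OF P12] by auto
qed

lemma scale_eq:
  fixes r :: complex and a :: real
  assumes "0 \<le> a" "a = 0 \<Longrightarrow> r = 0"
  shows "r = of_real a * (r / of_real a)"
  using assms by (cases "a = 0") auto

lemma coeffs:
  assumes P: "\<And>x y z. 0 \<le> psdF d0 d1 d2 r01 r02 r12 x y z"
  obtains a b \<alpha> \<beta> \<gamma> A B where "0 \<le> a" "a * a = d0" "0 \<le> b" "b * b = d1" "0 \<le> d2"
    "r01 = of_real (a*b) * \<alpha>" "r02 = of_real a * \<beta>" "r12 = of_real b * \<gamma>" "cmod \<alpha> \<le> 1"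
    "A + B * \<alpha> = \<beta>" "A * cnj \<alpha> + B = \<gamma>" "(cmod A)\<^sup>2 + (cmod B)\<^sup>2 + 2*Re(cnj A * B * \<alpha>) \<le> d2"
proof -
  note M = minors[OF P]
  define a where "a = sqrt d0"
  define b where "b = sqrt d1"
  have a: "0 \<le> a" "a * a = d0" and b: "0 \<le> b" "b * b = d1" using M unfolding a_def b_def by auto
  define \<alpha> where "\<alpha> = r01 / of_real (a*b)"
  define \<beta> where "\<beta> = r02 / of_real a"
  define \<gamma> where "\<gamma> = r12 / of_real b"
  have z01: "r01 = 0" if "a * b = 0"
  proof -
    have "d0 * d1 = 0" using that a b by (metis mult_zero_left mult_zero_right mult_eq_0_iff)
    then have "(cmod r01)\<^sup>2 \<le> 0" using M(4) by linarith
    then show ?thesis by simp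
  qed
  have z02: "r02 = 0" if "a = 0"
    using M(5) that a by (simp add: power2_eq_square) (smt (verit) mult_eq_0_iff zero_le_power2 power2_eq_square norm_eq_zero)
  have z12: "r12 = 0" if "b = 0"
    using M(6) that b by (simp add: power2_eq_square) (smt (verit) mult_eq_0_iff zero_le_power2 power2_eq_square norm_eq_zero)
  have r01: "r01 = of_real (a*b) * \<alpha>" unfolding \<alpha>_def using z01 a b by (intro scale_eq) auto
  have r02: "r02 = of_real a * \<beta>" unfolding \<beta>_def using z02 a by (intro scale_eq) auto
  have r12: "r12 = of_real b * \<gamma>" unfolding \<gamma>_def using z12 b by (intro scale_eq) auto
  have al: "cmod \<alpha> \<le> 1"
  proof (cases "a * b = 0")
    case True then show ?thesis unfolding \<alpha>_def True by simp
  next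
    case False
    then have ab: "0 < a * b" using a b by simp
    have "(cmod r01)\<^sup>2 \<le> d0 * d1" by (rule M(4))
    then have "(cmod r01)\<^sup>2 \<le> (a*b)\<^sup>2" unfolding a(2)[symmetric] b(2)[symmetric]
      by (simp add: power2_eq_square algebra_simps)
    then have "cmod r01 \<le> a * b" using ab by (simp add: power_mono_iff abs_le_square_iff)
    moreover have "cmod (complex_of_real (a*b)) = a*b" using ab by (simp only: norm_of_real abs_of_pos)
    ultimately show ?thesis unfolding \<alpha>_def norm_divide using ab by (simp add: divide_le_eq)
  qed
  define Deg where "Deg = (0 < a \<and> 0 < b \<and> cmod \<alpha> = 1)"
  define Dc where "Dc = complex_of_real (1 - (cmod \<alpha>)\<^sup>2)"
  define A where "A = (if Deg then \<beta> else (\<beta> - \<alpha> * \<gamma>) / Dc)"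
  define B where "B = (if Deg then 0 else (\<gamma> - cnj \<alpha> * \<beta>) / Dc)"
  have aa: "\<alpha> * cnj \<alpha> = of_real ((cmod \<alpha>)\<^sup>2)" by (rule complex_norm_square[symmetric])
  have E: "A + B * \<alpha> = \<beta> \<and> A * cnj \<alpha> + B = \<gamma> \<and> (cmod A)\<^sup>2 + (cmod B)\<^sup>2 + 2*Re(cnj A * B * \<alpha>) \<le> d2"
  proof (cases Deg)
    case True
    then have pos: "0 < a" "0 < b" "cmod \<alpha> = 1" unfolding Deg_def by auto
    have sq: "(cmod r01)\<^sup>2 = d0 * d1" using pos unfolding r01 a(2)[symmetric] b(2)[symmetric]
      by (simp add: norm_mult power2_eq_square)
    have K: "of_real d0 * r12 = cnj r01 * r02" by (rule kernel_eq[OF P M(3) sq])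
    then have "of_real (a*a*b) * \<gamma> = of_real (a*a*b) * (cnj \<alpha> * \<beta>)"
      unfolding r01 r02 r12 a(2)[symmetric] by (simp add: algebra_simps)
    then have g: "\<gamma> = cnj \<alpha> * \<beta>" using pos by simp
    have "(cmod r02)\<^sup>2 \<le> d0 * d2" by (rule M(5))
    then have "a * a * (cmod \<beta>)\<^sup>2 \<le> a * a * d2"
      unfolding r02 a(2)[symmetric] by (simp add: norm_mult power2_eq_square algebra_simps)
    then have "(cmod \<beta>)\<^sup>2 \<le> d2" using pos by simp
    then show ?thesis using True g unfolding A_def B_def by (simp add: mult.commute)
  next
    case False
    have al1: "cmod \<alpha> < 1"
    proof (cases "0 < a \<and> 0 < b")
      case True then show ?thesis using False al unfolding Deg_def by auto
    next
      case False
      then have ab0: "a * b = 0" using a b by auto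
      show ?thesis unfolding \<alpha>_def ab0 by simp
    qed
    have "(cmod \<alpha>)\<^sup>2 < 1\<^sup>2" by (rule power_strict_mono[OF al1 norm_ge_zero]) simp
    then have nz: "1 - (cmod \<alpha>)\<^sup>2 \<noteq> 0" by simp
    have nzc: "Dc \<noteq> 0" unfolding Dc_def by (metis nz of_real_eq_0_iff)
    have Dce: "1 - \<alpha> * cnj \<alpha> = Dc" unfolding Dc_def aa by simp
    have E1: "A + B * \<alpha> = \<beta>"
    proof -
      have "A + B * \<alpha> = ((\<beta> - \<alpha> * \<gamma>) + (\<gamma> - cnj \<alpha> * \<beta>) * \<alpha>) / Dc"
        unfolding A_def B_def using False nzc by (simp add: field_simps)
      also have "(\<beta> - \<alpha> * \<gamma>) + (\<gamma> - cnj \<alpha> * \<beta>) * \<alpha> = \<beta> * (1 - \<alpha> * cnj \<alpha>)"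
        by (simp add: algebra_simps)
      also have "... = \<beta> * Dc" unfolding Dce ..
      finally show ?thesis using nzc by simp
    qed
    have E2: "A * cnj \<alpha> + B = \<gamma>"
    proof -
      have "A * cnj \<alpha> + B = ((\<beta> - \<alpha> * \<gamma>) * cnj \<alpha> + (\<gamma> - cnj \<alpha> * \<beta>)) / Dc"
        unfolding A_def B_def using False nzc by (simp add: field_simps)
      also have "(\<beta> - \<alpha> * \<gamma>) * cnj \<alpha> + (\<gamma> - cnj \<alpha> * \<beta>) = \<gamma> * (1 - \<alpha> * cnj \<alpha>)"
        by (simp add: algebra_simps)
      also have "... = \<gamma> * Dc" unfolding Dce ..
      finally show ?thesis using nzc by simp
    qed
    have E3: "(cmod A)\<^sup>2 + (cmod B)\<^sup>2 + 2*Re(cnj A * B * \<alpha>) \<le> d2"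
    proof (cases "0 < a \<and> 0 < b")
      case True
      then show ?thesis using schur_ineq[OF P _ a(2) _ b(2) r01 r02 r12 E1 E2] by auto
    next
      case nab: False
      then have ab0: "a * b = 0" using a b by auto
      have al0: "\<alpha> = 0" unfolding \<alpha>_def ab0 by simp
      then have AB: "A = \<beta>" "B = \<gamma>" unfolding A_def B_def Dc_def using False by auto
      show ?thesis
      proof (cases "a = 0")
        case True
        have "\<beta> = 0" unfolding \<beta>_def True by simp
        have "(cmod \<gamma>)\<^sup>2 \<le> d2"
        proof (cases "b = 0")
          case True then show ?thesis unfolding \<gamma>_def True using M(3) by simp
        next
          case False
          have "(cmod r12)\<^sup>2 \<le> d1 * d2" by (rule M(6))
          then have "b * b * (cmod \<gamma>)\<^sup>2 \<le> b * b * d2"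
            unfolding r12 b(2)[symmetric] by (simp add: norm_mult power2_eq_square algebra_simps)
          moreover have "0 < b * b" using False b(1) by simp
          ultimately show ?thesis by (simp add: mult_le_cancel_left_pos)
        qed
        then show ?thesis using AB al0 \<open>\<beta> = 0\<close> by simp
      next
        case False
        then have "b = 0" using nab a b by auto
        then have "\<gamma> = 0" unfolding \<gamma>_def by simp
        have "(cmod r02)\<^sup>2 \<le> d0 * d2" by (rule M(5))
        then have "a * a * (cmod \<beta>)\<^sup>2 \<le> a * a * d2"
          unfolding r02 a(2)[symmetric] by (simp add: norm_mult power2_eq_square algebra_simps)
        moreover have "0 < a * a" using False a(1) by simp
        ultimately have "(cmod \<beta>)\<^sup>2 \<le> d2" by (simp add: mult_le_cancel_left_pos)
        then show ?thesis using AB al0 \<open>\<gamma> = 0\<close> by simp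
      qed
    qed
    show ?thesis using E1 E2 E3 by simp
  qed
  show ?thesis using that[OF a b M(3) r01 r02 r12 al] E by blast
qed



definition psi :: "real \<Rightarrow> real \<Rightarrow> complex \<Rightarrow> complex \<Rightarrow> nat \<Rightarrow> complex" where
  "psi a b z v = (\<lambda>i. if i = 0 then of_real a else if i = 1 then of_real b * cnj z else if i = 2 then cnj v else 0)"

lemma cmod_affine_sq:
  assumes "cmod z = 1"
  shows "(cmod (A + B * z))\<^sup>2 = (cmod A)\<^sup>2 + (cmod B)\<^sup>2 + 2 * Re (cnj A * B * z)"
proof -
  have "(cmod (A + B * z))\<^sup>2 = (cmod A)\<^sup>2 + (cmod B)\<^sup>2 * (cmod z)\<^sup>2 + 2 * Re (cnj A * B * z)"
    by (simp add: csimps)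
  then show ?thesis using assms by simp
qed

lemma cnj_self_unit: "cmod z = 1 \<Longrightarrow> cnj z * z = 1"
  by (metis complex_norm_square mult.commute of_real_1 one_power2)

lemma term12: "of_real p * psi a b z v 1 * cnj (psi a b z v 2) = of_real p * (of_real b * cnj z) * v"
  by (simp add: psi_def)

lemma construct:
  assumes P: "\<And>x y z. 0 \<le> psdF d0 d1 d2 r01 r02 r12 x y z"
  shows "\<exists>L. (\<forall>(p,\<psi>)\<in>set L. 0 \<le> p \<and> (cmod (\<psi> 0))\<^sup>2 = d0 \<and> (cmod (\<psi> 1))\<^sup>2 = d1 \<and> (cmod (\<psi> (2::nat)))\<^sup>2 = d2)
     \<and> sum_list (map fst L) = 1
     \<and> sum_list (map (\<lambda>(p,\<psi>). of_real p * \<psi> 0 * cnj (\<psi> 1)) L) = r01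
     \<and> sum_list (map (\<lambda>(p,\<psi>). of_real p * \<psi> 0 * cnj (\<psi> (2::nat))) L) = r02
     \<and> sum_list (map (\<lambda>(p,\<psi>). of_real p * \<psi> 1 * cnj (\<psi> (2::nat))) L) = r12"
proof -
  obtain a b \<alpha> \<beta> \<gamma> A B where a: "0 \<le> a" "a * a = d0" and b: "0 \<le> b" "b * b = d1" and d2: "0 \<le> d2"
    and r01: "r01 = of_real (a*b) * \<alpha>" and r02: "r02 = of_real a * \<beta>" and r12: "r12 = of_real b * \<gamma>"
    and al: "cmod \<alpha> \<le> 1" and E1: "A + B * \<alpha> = \<beta>" and E2: "A * cnj \<alpha> + B = \<gamma>"
    and E3: "(cmod A)\<^sup>2 + (cmod B)\<^sup>2 + 2*Re(cnj A * B * \<alpha>) \<le> d2"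
    using coeffs[OF P] by blast
  define w where "w = cnj A * B"
  define dir where "dir = (if w = 0 then 1 else \<i> * cnj w * of_real (1 / cmod w))"
  have dir1: "cmod dir = 1" unfolding dir_def by (simp add: norm_mult norm_divide)
  have wd: "Re (w * dir) = 0" unfolding dir_def by (simp add: algebra_simps)
  obtain t1 t2 l where l: "0 \<le> l" "l \<le> 1" and z1: "cmod (\<alpha> + of_real t1 * dir) = 1"
    and z2: "cmod (\<alpha> + of_real t2 * dir) = 1" and lt: "l * t1 + (1 - l) * t2 = 0"
    using chord[OF al dir1] by blast
  define Z1 where "Z1 = \<alpha> + of_real t1 * dir"
  define Z2 where "Z2 = \<alpha> + of_real t2 * dir"
  have Z1: "cmod Z1 = 1" and Z2: "cmod Z2 = 1" using z1 z2 unfolding Z1_def Z2_def by auto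
  have K1: "of_real l * Z1 + of_real (1 - l) * Z2 = \<alpha>"
  proof -
    have "of_real l * Z1 + of_real (1 - l) * Z2 = \<alpha> + of_real (l * t1 + (1 - l) * t2) * dir"
      unfolding Z1_def Z2_def by (simp add: algebra_simps)
    then show ?thesis unfolding lt by simp
  qed
  have K1c: "of_real l * cnj Z1 + of_real (1 - l) * cnj Z2 = cnj \<alpha>"
    using arg_cong[OF K1, of cnj] by simp
  have nu_bound: "cmod (A + B * (\<alpha> + of_real t * dir)) \<le> sqrt d2" if u: "cmod (\<alpha> + of_real t * dir) = 1" for t
  proof -
    have "Re (cnj A * B * (\<alpha> + of_real t * dir)) = Re (cnj A * B * \<alpha>) + t * Re (w * dir)"
      unfolding w_def by (simp add: algebra_simps)
    then have "Re (cnj A * B * (\<alpha> + of_real t * dir)) = Re (cnj A * B * \<alpha>)" using wd by simp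
    then have "(cmod (A + B * (\<alpha> + of_real t * dir)))\<^sup>2 \<le> d2"
      unfolding cmod_affine_sq[OF u] using E3 by simp
    then show ?thesis by (rule real_le_rsqrt)
  qed
  define N1 where "N1 = A + B * Z1"
  define N2 where "N2 = A + B * Z2"
  have N1: "cmod N1 \<le> sqrt d2" unfolding N1_def Z1_def by (rule nu_bound[OF z1])
  have N2: "cmod N2 \<le> sqrt d2" unfolding N2_def Z2_def by (rule nu_bound[OF z2])
  obtain s11 s12 m1 where m1: "0 \<le> m1" "m1 \<le> 1" and v11: "cmod (N1 + of_real s11 * 1) = sqrt d2"
    and v12: "cmod (N1 + of_real s12 * 1) = sqrt d2" and ms1: "m1 * s11 + (1 - m1) * s12 = 0"
    using chord[OF N1, of 1] by auto
  obtain s21 s22 m2 where m2: "0 \<le> m2" "m2 \<le> 1" and v21: "cmod (N2 + of_real s21 * 1) = sqrt d2"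
    and v22: "cmod (N2 + of_real s22 * 1) = sqrt d2" and ms2: "m2 * s21 + (1 - m2) * s22 = 0"
    using chord[OF N2, of 1] by auto
  define V11 where "V11 = N1 + of_real s11"
  define V12 where "V12 = N1 + of_real s12"
  define V21 where "V21 = N2 + of_real s21"
  define V22 where "V22 = N2 + of_real s22"
  have V: "cmod V11 = sqrt d2" "cmod V12 = sqrt d2" "cmod V21 = sqrt d2" "cmod V22 = sqrt d2"
    using v11 v12 v21 v22 unfolding V11_def V12_def V21_def V22_def by auto
  have K2: "of_real m1 * V11 + of_real (1 - m1) * V12 = N1"
  proof -
    have "of_real m1 * V11 + of_real (1 - m1) * V12 = N1 + of_real (m1 * s11 + (1 - m1) * s12)"
      unfolding V11_def V12_def by (simp add: algebra_simps)
    then show ?thesis unfolding ms1 by simp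
  qed
  have K3: "of_real m2 * V21 + of_real (1 - m2) * V22 = N2"
  proof -
    have "of_real m2 * V21 + of_real (1 - m2) * V22 = N2 + of_real (m2 * s21 + (1 - m2) * s22)"
      unfolding V21_def V22_def by (simp add: algebra_simps)
    then show ?thesis unfolding ms2 by simp
  qed
  define L where "L = [(l * m1, psi a b Z1 V11), (l * (1 - m1), psi a b Z1 V12),
                       ((1 - l) * m2, psi a b Z2 V21), ((1 - l) * (1 - m2), psi a b Z2 V22)]"
  have c1: "\<forall>(p,\<psi>)\<in>set L. 0 \<le> p \<and> (cmod (\<psi> 0))\<^sup>2 = d0 \<and> (cmod (\<psi> 1))\<^sup>2 = d1 \<and> (cmod (\<psi> 2))\<^sup>2 = d2"
    using l m1 m2 a b d2 Z1 Z2 V unfolding L_def psi_def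
    by (auto simp: norm_mult power2_eq_square)
  have c2: "sum_list (map fst L) = 1" unfolding L_def by (simp add: algebra_simps)
  have c3: "sum_list (map (\<lambda>(p,\<psi>). of_real p * \<psi> 0 * cnj (\<psi> 1)) L) = r01"
  proof -
    have "sum_list (map (\<lambda>(p,\<psi>). of_real p * \<psi> 0 * cnj (\<psi> 1)) L)
        = of_real a * of_real b * (of_real l * Z1 + of_real (1 - l) * Z2)"
      unfolding L_def psi_def by (simp add: algebra_simps)
    then show ?thesis unfolding K1 r01 by simp
  qed
  have c4: "sum_list (map (\<lambda>(p,\<psi>). of_real p * \<psi> 0 * cnj (\<psi> 2)) L) = r02"
  proof -
    have "sum_list (map (\<lambda>(p,\<psi>). of_real p * \<psi> 0 * cnj (\<psi> 2)) L)
        = of_real a * (of_real l * (of_real m1 * V11 + of_real (1 - m1) * V12)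
              + of_real (1 - l) * (of_real m2 * V21 + of_real (1 - m2) * V22))"
      unfolding L_def psi_def by (simp add: algebra_simps)
    also have "... = of_real a * (of_real l * N1 + of_real (1 - l) * N2)" unfolding K2 K3 ..
    also have "... = of_real a * (A + B * (of_real l * Z1 + of_real (1 - l) * Z2))"
      unfolding N1_def N2_def by (simp add: algebra_simps)
    finally show ?thesis unfolding K1 E1 r02 .
  qed
  have c5: "sum_list (map (\<lambda>(p,\<psi>). of_real p * \<psi> 1 * cnj (\<psi> 2)) L) = r12"
  proof -
    have "sum_list (map (\<lambda>(p,\<psi>). of_real p * \<psi> 1 * cnj (\<psi> 2)) L)
        = of_real b * (of_real l * cnj Z1 * (of_real m1 * V11 + of_real (1 - m1) * V12)
              + of_real (1 - l) * cnj Z2 * (of_real m2 * V21 + of_real (1 - m2) * V22))"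
    proof -
      have "sum_list (map (\<lambda>(p,\<psi>). of_real p * \<psi> 1 * cnj (\<psi> 2)) L)
        = of_real (l * m1) * (of_real b * cnj Z1) * V11 + (of_real (l * (1 - m1)) * (of_real b * cnj Z1) * V12
          + (of_real ((1 - l) * m2) * (of_real b * cnj Z2) * V21 + (of_real ((1 - l) * (1 - m2)) * (of_real b * cnj Z2) * V22 + 0)))"
        unfolding L_def by (simp only: list.map sum_list.Cons sum_list.Nil prod.case term12)
      also have "... = of_real b * (of_real l * cnj Z1 * (of_real m1 * V11 + of_real (1 - m1) * V12)
              + of_real (1 - l) * cnj Z2 * (of_real m2 * V21 + of_real (1 - m2) * V22))"
        unfolding of_real_mult of_real_diff of_real_1 by algebra
      finally show ?thesis .
    qed
    also have "... = of_real b * (of_real l * cnj Z1 * N1 + of_real (1 - l) * cnj Z2 * N2)" unfolding K2 K3 ..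
    also have "... = of_real b * (A * (of_real l * cnj Z1 + of_real (1 - l) * cnj Z2)
         + B * (of_real l * (cnj Z1 * Z1) + of_real (1 - l) * (cnj Z2 * Z2)))"
      unfolding N1_def N2_def by (simp add: algebra_simps)
    also have "... = of_real b * (A * cnj \<alpha> + B)"
      unfolding K1c cnj_self_unit[OF Z1] cnj_self_unit[OF Z2] by (simp add: algebra_simps)
    finally show ?thesis unfolding E2 r12 .
  qed
  show ?thesis by (rule exI[of _ L], intro conjI, fact c1, fact c2, fact c3, fact c4, fact c5)
qed


lemma diagRe: "Re (cnj x * of_real d * x) = d * (cmod x)\<^sup>2"
  by (simp add: csimps)

lemma offRe: "Re (cnj y * cnj r * x) = Re (cnj x * r * y)"
  by (simp add: algebra_simps)

lemma form3:
  fixes \<rho> :: "nat \<Rightarrow> nat \<Rightarrow> complex" and v :: "nat \<Rightarrow> complex"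
  assumes h: "\<rho> 1 0 = cnj (\<rho> 0 1)" "\<rho> 2 0 = cnj (\<rho> 0 2)" "\<rho> 2 1 = cnj (\<rho> 1 2)"
    and dg: "\<rho> 0 0 = of_real d0" "\<rho> 1 1 = of_real d1" "\<rho> 2 2 = of_real d2"
  shows "Re (\<Sum>i<3. \<Sum>j<3. cnj (v i) * \<rho> i j * v j) = psdF d0 d1 d2 (\<rho> 0 1) (\<rho> 0 2) (\<rho> 1 2) (v 0) (v 1) (v 2)"
  unfolding sum3 h dg plus_complex.sel diagRe offRe psdF_def by simp

lemma form2:
  fixes \<rho> :: "nat \<Rightarrow> nat \<Rightarrow> complex" and v :: "nat \<Rightarrow> complex"
  assumes h: "\<rho> 1 0 = cnj (\<rho> 0 1)"
    and dg: "\<rho> 0 0 = of_real d0" "\<rho> 1 1 = of_real d1"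
  shows "Re (\<Sum>i<2. \<Sum>j<2. cnj (v i) * \<rho> i j * v j) = psdF d0 d1 0 (\<rho> 0 1) 0 0 (v 0) (v 1) z"
  unfolding sum2 h dg plus_complex.sel diagRe offRe psdF_def by simp

lemma real_diag: "z = cnj z \<Longrightarrow> z = of_real (Re z)"
  by (simp add: complex_eq_iff)

lemma Gswap: "sum_list (map (\<lambda>x. of_real (fst x) * snd x j * cnj (snd x i)) L)
   = cnj (sum_list (map (\<lambda>x. of_real (fst x) * snd x i * cnj (snd x j)) L))"
  by (induction L) auto

lemma Gdiag:
  assumes "\<forall>x\<in>set L. (cmod (snd x i))\<^sup>2 = c" "sum_list (map fst L) = 1"
  shows "sum_list (map (\<lambda>x. of_real (fst x) * snd x i * cnj (snd x i)) L) = of_real c"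
proof -
  have "sum_list (map (\<lambda>x. of_real (fst x) * snd x i * cnj (snd x i)) L)
      = sum_list (map (\<lambda>x. of_real (fst x * c)) L)"
  proof (rule arg_cong[where f=sum_list], rule map_cong)
    fix x assume "x \<in> set L"
    then have "(cmod (snd x i))\<^sup>2 = c" using assms(1) by auto
    then show "of_real (fst x) * snd x i * cnj (snd x i) = complex_of_real (fst x * c)"
      by (metis complex_norm_square mult.assoc of_real_mult)
  qed simp
  also have "... = of_real (sum_list (map fst L) * c)"
    by (induction L) (auto simp: algebra_simps)
  finally show ?thesis using assms(2) by simp
qed

lemma exist_decomp:
  assumes n: "n = 2 \<or> n = 3" and dm: "density_matrix n \<rho>"
  shows "\<exists>D. pure_decomp n \<rho> D \<and> (\<forall>x\<in>set D. cvec n (snd x) = diag_vec n \<rho>) \<and> sum_list (map fst D) = 1"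
proof -
  have H: "\<forall>i<n. \<forall>j<n. \<rho> j i = cnj (\<rho> i j)"
    and Pn: "\<And>v. 0 \<le> Re (\<Sum>i<n. \<Sum>j<n. cnj (v i) * \<rho> i j * v j)"
    and T: "(\<Sum>i<n. \<rho> i i) = 1" using dm unfolding density_matrix_def by blast+
  have n2: "2 \<le> n" "n \<le> 3" using n by auto
  define d0 where "d0 = Re (\<rho> 0 0)"
  define d1 where "d1 = Re (\<rho> 1 1)"
  define d2 where "d2 = diag_vec n \<rho> 2"
  define r01 where "r01 = \<rho> 0 1"
  define r02 where "r02 = (if n = 3 then \<rho> 0 2 else 0)"
  define r12 where "r12 = (if n = 3 then \<rho> 1 2 else 0)"
  have hh: "\<And>i j. i < n \<Longrightarrow> j < n \<Longrightarrow> \<rho> j i = cnj (\<rho> i j)" using H by blast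
  have dg0: "\<rho> 0 0 = of_real d0" unfolding d0_def by (rule real_diag, rule hh) (use n2 in auto)
  have dg1: "\<rho> 1 1 = of_real d1" unfolding d1_def by (rule real_diag, rule hh) (use n2 in auto)
  have h10: "\<rho> 1 0 = cnj (\<rho> 0 1)" by (rule hh) (use n2 in auto)
  have h20: "\<rho> 2 0 = cnj (\<rho> 0 2)" if "n = 3" by (rule hh) (use that in auto)
  have h21: "\<rho> 2 1 = cnj (\<rho> 1 2)" if "n = 3" by (rule hh) (use that in auto)
  have P: "\<And>x y z. 0 \<le> psdF d0 d1 d2 r01 r02 r12 x y z"
  proof -
    fix x y z :: complex
    define v where "v = (\<lambda>i::nat. if i = 0 then x else if i = 1 then y else z)"
    show "0 \<le> psdF d0 d1 d2 r01 r02 r12 x y z"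
    proof (cases "n = 3")
      case True
      have dg2: "\<rho> 2 2 = of_real d2" unfolding d2_def diag_vec_def using True
        by simp (rule real_diag, rule hh, use True in auto)
      have "Re (\<Sum>i<3. \<Sum>j<3. cnj (v i) * \<rho> i j * v j) = psdF d0 d1 d2 (\<rho> 0 1) (\<rho> 0 2) (\<rho> 1 2) (v 0) (v 1) (v 2)"
        by (rule form3[OF h10 h20[OF True] h21[OF True] dg0 dg1 dg2])
      moreover have "psdF d0 d1 d2 (\<rho> 0 1) (\<rho> 0 2) (\<rho> 1 2) (v 0) (v 1) (v 2) = psdF d0 d1 d2 r01 r02 r12 x y z"
        unfolding r01_def r02_def r12_def v_def using True by simp
      ultimately show ?thesis using Pn[of v] True by simp
    next
      case False
      then have n2': "n = 2" using n by simp
      have "Re (\<Sum>i<2. \<Sum>j<2. cnj (v i) * \<rho> i j * v j) = psdF d0 d1 0 (\<rho> 0 1) 0 0 (v 0) (v 1) z"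
        by (rule form2[OF h10 dg0 dg1])
      moreover have "d2 = 0" unfolding d2_def diag_vec_def using n2' by simp
      moreover have "psdF d0 d1 0 (\<rho> 0 1) 0 0 (v 0) (v 1) z = psdF d0 d1 d2 r01 r02 r12 x y z"
        unfolding r01_def r02_def r12_def v_def using n2' \<open>d2 = 0\<close> by simp
      ultimately show ?thesis using Pn[of v] n2' by simp
    qed
  qed
  obtain L where L1: "\<forall>(p,\<psi>)\<in>set L. 0 \<le> p \<and> (cmod (\<psi> 0))\<^sup>2 = d0 \<and> (cmod (\<psi> 1))\<^sup>2 = d1 \<and> (cmod (\<psi> (2::nat)))\<^sup>2 = d2"
     and L2: "sum_list (map fst L) = 1"
     and L3: "sum_list (map (\<lambda>(p,\<psi>). of_real p * \<psi> 0 * cnj (\<psi> 1)) L) = r01"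
     and L4: "sum_list (map (\<lambda>(p,\<psi>). of_real p * \<psi> 0 * cnj (\<psi> (2::nat))) L) = r02"
     and L5: "sum_list (map (\<lambda>(p,\<psi>). of_real p * \<psi> 1 * cnj (\<psi> (2::nat))) L) = r12"
    using construct[OF P] by blast
  define G where "G = (\<lambda>i j. sum_list (map (\<lambda>x. of_real (fst x) * snd x i * cnj (snd x j)) L))"
  have G01: "G 0 1 = \<rho> 0 1" using L3 unfolding G_def r01_def by (simp add: case_prod_unfold)
  have G02: "n = 3 \<Longrightarrow> G 0 2 = \<rho> 0 2" using L4 unfolding G_def r02_def by (simp add: case_prod_unfold)
  have G12: "n = 3 \<Longrightarrow> G 1 2 = \<rho> 1 2" using L5 unfolding G_def r12_def by (simp add: case_prod_unfold)
  have Gsw: "G j i = cnj (G i j)" for i j unfolding G_def by (rule Gswap)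
  have mod: "\<forall>x\<in>set L. \<forall>i<n. (cmod (snd x i))\<^sup>2 = diag_vec n \<rho> i"
  proof (intro ballI allI impI)
    fix x i assume x: "x \<in> set L" and i: "i < n"
    then have "i = 0 \<or> i = 1 \<or> i = 2" using n2 by auto
    then show "(cmod (snd x i))\<^sup>2 = diag_vec n \<rho> i"
      using L1 x i n2 unfolding d0_def d1_def d2_def diag_vec_def by (auto simp: case_prod_unfold)
  qed
  have diagr: "\<rho> i i = of_real (diag_vec n \<rho> i)" if "i < n" for i
    unfolding diag_vec_def using that by simp (rule real_diag, rule hh, use that in auto)
  have Gd: "G i i = \<rho> i i" if "i < n" for i
    unfolding G_def diagr[OF that] by (rule Gdiag) (use mod that L2 in auto)
  have Gall: "\<rho> i j = G i j" if "i < n" "j < n" for i j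
  proof -
    have i3: "i = 0 \<or> i = 1 \<or> i = 2" and j3: "j = 0 \<or> j = 1 \<or> j = 2" using that n2 by auto
    have n3: "n = 3" if "i = 2 \<or> j = 2" using that \<open>i < n\<close> \<open>j < n\<close> n by auto
    show ?thesis using i3 j3
    proof (elim disjE)
    qed (use Gd[OF that(1)] G01 G02 G12 Gsw[of 1 0] Gsw[of 2 0] Gsw[of 2 1] h10 h20 h21 n3 that in \<open>auto\<close>)
  qed
  define D where "D = filter (\<lambda>x. 0 < fst x) L"
  have setD: "set D \<subseteq> set L" unfolding D_def by auto
  have zero: "fst x = 0" if "x \<in> set L" "\<not> 0 < fst x" for x
    using L1 that by (auto simp: case_prod_unfold)
  have sD: "sum_list (map fst D) = 1" unfolding D_def using L2
    by (subst sum_list_map_filter) (use zero in auto)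
  have GD: "sum_list (map (\<lambda>x. of_real (fst x) * snd x i * cnj (snd x j)) D) = G i j" for i j
    unfolding D_def G_def by (rule sum_list_map_filter) (use zero in auto)
  have unit: "unit_vec n (snd x)" if "x \<in> set L" for x
  proof -
    have "(\<Sum>i<n. (cmod (snd x i))\<^sup>2) = (\<Sum>i<n. Re (\<rho> i i))"
      using mod that unfolding diag_vec_def by auto
    also have "... = Re (\<Sum>i<n. \<rho> i i)" by simp
    also have "... = 1" using T by simp
    finally show ?thesis unfolding unit_vec_def .
  qed
  have pd: "pure_decomp n \<rho> D"
    unfolding pure_decomp_def
  proof (intro conjI)
    show "\<forall>(p, \<psi>)\<in>set D. 0 < p \<and> unit_vec n \<psi>"
      using unit setD unfolding D_def by auto
    show "(\<Sum>k<length D. fst (D ! k)) = 1" unfolding sum_len_conv by (rule sD)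
    show "\<forall>i<n. \<forall>j<n. \<rho> i j = (\<Sum>k<length D. complex_of_real (fst (D ! k)) * snd (D ! k) i * cnj (snd (D ! k) j))"
      unfolding sum_len_conv[of "\<lambda>x. complex_of_real (fst x) * snd x _ * cnj (snd x _)" D] GD
      using Gall by auto
  qed
  have cv: "\<forall>x\<in>set D. cvec n (snd x) = diag_vec n \<rho>"
  proof
    fix x assume "x \<in> set D"
    then have x: "x \<in> set L" using setD by auto
    show "cvec n (snd x) = diag_vec n \<rho>"
      using mod x unfolding cvec_def diag_vec_def by auto
  qed
  show ?thesis using pd cv sD by blast
qed

theorem corollary1:
  fixes n :: nat and f :: "(nat \<Rightarrow> real) \<Rightarrow> real" and \<rho> :: "nat \<Rightarrow> nat \<Rightarrow> complex"
  assumes "n = 2 \<or> n = 3"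
    and "f \<in> F_sc n"
    and "density_matrix n \<rho>"
  shows "(\<exists>D. pure_decomp n \<rho> D \<and> avg_coh n f D = f (diag_vec n \<rho>))
       \<and> (\<forall>D. pure_decomp n \<rho> D \<longrightarrow> avg_coh n f D \<le> f (diag_vec n \<rho>))"
proof
  obtain D where D: "pure_decomp n \<rho> D" "\<forall>x\<in>set D. cvec n (snd x) = diag_vec n \<rho>" "sum_list (map fst D) = 1"
    using exist_decomp[OF assms(1,3)] by blast
  have "avg_coh n f D = sum_list (map (\<lambda>x. fst x * f (diag_vec n \<rho>)) D)"
    unfolding avg_coh_def sum_len_conv[of "\<lambda>x. fst x * coh n f (snd x)" D]
  proof (rule arg_cong[where f=sum_list], rule map_cong)
    fix x assume "x \<in> set D"
    then show "fst x * coh n f (snd x) = fst x * f (diag_vec n \<rho>)"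
      using D(2) unfolding coh_def cvec_def by auto
  qed simp
  also have "... = sum_list (map fst D) * f (diag_vec n \<rho>)"
    by (induction D) (auto simp: algebra_simps)
  finally have "avg_coh n f D = f (diag_vec n \<rho>)" using D(3) by simp
  then show "\<exists>D. pure_decomp n \<rho> D \<and> avg_coh n f D = f (diag_vec n \<rho>)" using D(1) by blast
next
  show "\<forall>D. pure_decomp n \<rho> D \<longrightarrow> avg_coh n f D \<le> f (diag_vec n \<rho>)"
    using upper_bound[OF assms(2)] by blast
qed

end
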